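(* Let $d\ge1$, let $\Gamma$ be the free group on $d$ generators $a_1,\dots,a_d$, and let $T_{2d}$ be the Cayley graph of $\Gamma$ with respect to $\{a_1,\dots,a_d\}$ (a $2d$-regular tree), with $\Gamma$ acting by left multiplication; set $G=\mathrm{Aut}(T_{2d})$ and view $\Gamma\le G$. Let $K_d\trianglelefteq\Gamma$ be the kernel of the abelianization $\Gamma\to\mathbb Z^d$ (so $T_{2d}/K_d$ is the Cayley graph of $\mathbb Z^d$ with respect to the standard generators). Then $\mathrm{Comm}_G(K_d)\cap\mathrm{Comm}_G(\Gamma)$ is discrete in $G$.
   Context: $G$ carries the compact-open (permutation) topology. $\mathrm{Comm}_G(A)=\{g\in G: gAg^{-1}\cap A$ has finite index in both $A$ and $gAg^{-1}\}$. *)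

theory Defs
  imports "HOL-Algebra.Bij" "HOL-Algebra.Coset"
begin

text \<open>A letter (i, True) stands for a_i, (i, False) for a_i^-1.\<close>
type_synonym letter = "nat \<times> bool"

fun reduced :: "letter list \<Rightarrow> bool" where
  "reduced [] = True"
| "reduced [x] = True"
| "reduced (x # y # ys) = ((\<not> (fst x = fst y \<and> snd x \<noteq> snd y)) \<and> reduced (y # ys))"

fun cons_red :: "letter \<Rightarrow> letter list \<Rightarrow> letter list" where
  "cons_red x [] = [x]"
| "cons_red x (y # ys) = (if fst x = fst y \<and> snd x \<noteq> snd y then ys else x # y # ys)"

text \<open>Product in the free group: reduced form of the concatenation u v (v reduced).\<close>
definition mult_red :: "letter list \<Rightarrow> letter list \<Rightarrow> letter list" where
  "mult_red u v = foldr cons_red u v"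

text \<open>Elements of the free group Gamma on a_0,...,a_(d-1) = vertices of T_2d.\<close>
definition FG :: "nat \<Rightarrow> letter list set" where
  "FG d = {w. reduced w \<and> (\<forall>x\<in>set w. fst x < d)}"

text \<open>Cayley graph of Gamma w.r.t. {a_i}: u ~ u a_i^(+-1).\<close>
definition tree_adj :: "nat \<Rightarrow> letter list \<Rightarrow> letter list \<Rightarrow> bool" where
  "tree_adj d u v = (\<exists>i<d. \<exists>b. v = mult_red u [(i, b)])"

definition AutT :: "nat \<Rightarrow> (letter list \<Rightarrow> letter list) monoid" where
  "AutT d = (BijGroup (FG d))\<lparr>carrier :=
     {f \<in> Bij (FG d). \<forall>u\<in>FG d. \<forall>v\<in>FG d. tree_adj d u v \<longleftrightarrow> tree_adj d (f u) (f v)}\<rparr>"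

definition lmul :: "nat \<Rightarrow> letter list \<Rightarrow> letter list \<Rightarrow> letter list" where
  "lmul d g = (\<lambda>w\<in>FG d. mult_red g w)"

definition Gamma :: "nat \<Rightarrow> (letter list \<Rightarrow> letter list) set" where
  "Gamma d = lmul d ` FG d"

text \<open>Exponent sum of generator a_i in w: the i-th coordinate of the abelianization.\<close>
definition expsum :: "nat \<Rightarrow> letter list \<Rightarrow> int" where
  "expsum i w = (\<Sum>x\<leftarrow>w. if fst x = i then (if snd x then 1 else -1) else 0)"

definition Kd :: "nat \<Rightarrow> (letter list \<Rightarrow> letter list) set" where
  "Kd d = lmul d ` {w \<in> FG d. \<forall>i<d. expsum i w = 0}"

text \<open>B has finite index in A (B a subgroup of A inside the group G).\<close>
definition finite_index :: "('a, 'b) monoid_scheme \<Rightarrow> 'a set \<Rightarrow> 'a set \<Rightarrow> bool" where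
  "finite_index G B A = finite (rcosets\<^bsub>G\<lparr>carrier := A\<rparr>\<^esub> B)"

definition conj_set :: "('a, 'b) monoid_scheme \<Rightarrow> 'a \<Rightarrow> 'a set \<Rightarrow> 'a set" where
  "conj_set G g A = (\<lambda>a. g \<otimes>\<^bsub>G\<^esub> a \<otimes>\<^bsub>G\<^esub> inv\<^bsub>G\<^esub> g) ` A"

definition Comm :: "('a, 'b) monoid_scheme \<Rightarrow> 'a set \<Rightarrow> 'a set" where
  "Comm G A = {g \<in> carrier G.
      finite_index G (conj_set G g A \<inter> A) A \<and>
      finite_index G (conj_set G g A \<inter> A) (conj_set G g A)}"

text \<open>Discreteness of a subset S of G in the permutation (pointwise convergence)
  topology: each g in S has a basic neighbourhood {h. h = g on F}, F finite,
  meeting S only in g.\<close>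
definition discrete_in_AutT :: "nat \<Rightarrow> (letter list \<Rightarrow> letter list) set \<Rightarrow> bool" where
  "discrete_in_AutT d S = (\<forall>g\<in>S. \<exists>F. finite F \<and> F \<subseteq> FG d \<and>
      (\<forall>h\<in>S. (\<forall>x\<in>F. h x = g x) \<longrightarrow> h = g))"

end

theory Submission
  imports Defs
begin


definition cancl :: "letter \<Rightarrow> letter \<Rightarrow> bool" where
  "cancl x y \<longleftrightarrow> fst x = fst y \<and> snd x \<noteq> snd y"

definition flp :: "letter \<Rightarrow> letter" where "flp x = (fst x, \<not> snd x)"

definition winv :: "letter list \<Rightarrow> letter list" where "winv u = rev (map flp u)"

lemma reduced_Cons: "reduced (x # xs) \<Longrightarrow> reduced xs"
  by (cases xs) auto

lemma reduced_Cons2: "reduced (x # y # ys) \<longleftrightarrow> \<not> cancl x y \<and> reduced (y # ys)"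
  by (simp add: cancl_def)

lemma cons_red_reduced: "reduced w \<Longrightarrow> reduced (cons_red x w)"
  by (cases w) (auto dest: reduced_Cons)

lemma mult_red_Nil[simp]: "mult_red [] v = v"
  by (simp add: mult_red_def)

lemma mult_red_Cons[simp]: "mult_red (x # u) v = cons_red x (mult_red u v)"
  by (simp add: mult_red_def)

lemma mult_red_append: "mult_red (u @ u') v = mult_red u (mult_red u' v)"
  by (simp add: mult_red_def)

lemma mult_red_reduced: "reduced v \<Longrightarrow> reduced (mult_red u v)"
  by (induct u) (auto intro: cons_red_reduced)

lemma set_cons_red: "set (cons_red x w) \<subseteq> insert x (set w)"
  by (cases w) auto

lemma set_mult_red: "set (mult_red u v) \<subseteq> set u \<union> set v"
  apply (induct u)
   apply simp
  using set_cons_red by fastforce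

lemma mult_red_closed: "u \<in> FG d \<Longrightarrow> v \<in> FG d \<Longrightarrow> mult_red u v \<in> FG d"
  unfolding FG_def using set_mult_red mult_red_reduced by blast

lemma cons_red_cancel: "reduced w \<Longrightarrow> cons_red x (cons_red (flp x) w) = w"
proof (cases w)
  case Nil then show ?thesis by (simp add: flp_def)
next
  case (Cons y ys)
  assume r: "reduced w"
  show ?thesis
  proof (cases "fst (flp x) = fst y \<and> snd (flp x) \<noteq> snd y")
    case True
    then have y: "y = x" by (cases x, cases y) (auto simp: flp_def)
    show ?thesis
    proof (cases ys)
      case Nil then show ?thesis using True Cons y by (simp add: flp_def)
    next
      case (Cons z zs)
      with r \<open>w = y # ys\<close> y have "\<not> (fst x = fst z \<and> snd x \<noteq> snd z)" by simp
      then show ?thesis using True \<open>w = y # ys\<close> Cons y by (auto simp: flp_def)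
    qed
  next
    case False then show ?thesis using Cons by (auto simp: flp_def)
  qed
qed

lemma mult_red_cons_red:
  assumes "reduced r" "reduced v"
  shows "mult_red (cons_red x r) v = cons_red x (mult_red r v)"
proof (cases r)
  case Nil then show ?thesis by simp
next
  case (Cons y rs)
  show ?thesis
  proof (cases "fst x = fst y \<and> snd x \<noteq> snd y")
    case True
    then have "y = flp x" by (cases x, cases y) (auto simp: flp_def)
    moreover have "reduced (mult_red rs v)" using assms mult_red_reduced by blast
    ultimately have "cons_red x (cons_red y (mult_red rs v)) = mult_red rs v"
      using cons_red_cancel by simp
    then show ?thesis using True Cons by simp
  next
    case False then show ?thesis using Cons by auto
  qed
qed

lemma mult_red_assoc:
  assumes "reduced w" "reduced v"
  shows "mult_red (mult_red u w) v = mult_red u (mult_red w v)"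
  using assms
proof (induct u)
  case Nil then show ?case by simp
next
  case (Cons x u)
  have "reduced (mult_red u w)" using Cons mult_red_reduced by blast
  then show ?case using Cons by (simp add: mult_red_cons_red)
qed

lemma mult_red_Nil2: "reduced u \<Longrightarrow> mult_red u [] = u"
proof (induct u)
  case Nil then show ?case by simp
next
  case (Cons x u)
  then have "mult_red u [] = u" using reduced_Cons by blast
  then show ?case using Cons.prems by (cases u) auto
qed

lemma reduced_snoc:
  "reduced (xs @ [y]) \<longleftrightarrow> reduced xs \<and> (xs \<noteq> [] \<longrightarrow> \<not> cancl (last xs) y)"
proof (induct xs rule: reduced.induct)
  case 1 then show ?case by simp
next
  case (2 x) then show ?case by (simp add: cancl_def)
next
  case (3 x z zs) then show ?case by (simp add: cancl_def)
qed

lemma cancl_sym: "cancl x y \<longleftrightarrow> cancl y x"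
  by (auto simp: cancl_def)

lemma cancl_flp: "cancl (flp x) (flp y) \<longleftrightarrow> cancl x y"
  by (auto simp: cancl_def flp_def)

lemma winv_Cons: "winv (x # u) = winv u @ [flp x]"
  by (simp add: winv_def)

lemma winv_reduced: "reduced u \<Longrightarrow> reduced (winv u)"
proof (induct u)
  case Nil then show ?case by (simp add: winv_def)
next
  case (Cons x u)
  have ru: "reduced u" using Cons.prems reduced_Cons by blast
  show ?case
  proof (cases u)
    case Nil then show ?thesis by (simp add: winv_def)
  next
    case (Cons y ys)
    have "last (winv u) = flp y" using Cons by (simp add: winv_def)
    moreover have "\<not> cancl x y" using Cons.prems \<open>u = y # ys\<close> by (simp add: cancl_def)
    ultimately show ?thesis using Cons.hyps ru
      by (simp add: winv_Cons reduced_snoc cancl_flp cancl_sym winv_def)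
  qed
qed

lemma winv_winv[simp]: "winv (winv u) = u"
  by (simp add: winv_def flp_def rev_map comp_def)

lemma winv_left: "reduced u \<Longrightarrow> mult_red (winv u) u = []"
proof (induct u)
  case Nil then show ?case by (simp add: winv_def)
next
  case (Cons x u)
  have "cons_red (flp x) (x # u) = u" by (simp add: flp_def)
  then show ?case using Cons reduced_Cons
    by (simp add: winv_Cons mult_red_append)
qed

lemma winv_right: "reduced u \<Longrightarrow> mult_red u (winv u) = []"
  using winv_left[of "winv u"] winv_reduced by simp

lemma winv_closed: "u \<in> FG d \<Longrightarrow> winv u \<in> FG d"
  using winv_reduced[of u] by (auto simp: FG_def winv_def flp_def)

lemma expsum_Nil[simp]: "expsum i [] = 0"
  by (simp add: expsum_def)

lemma expsum_Cons: "expsum i (x # w) = expsum i [x] + expsum i w"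
  by (simp add: expsum_def)

lemma expsum_cons_red: "expsum i (cons_red x w) = expsum i [x] + expsum i w"
proof (cases w)
  case Nil then show ?thesis by (simp add: expsum_def)
next
  case (Cons y ys)
  then show ?thesis
    by (cases x, cases y) (auto simp: expsum_def)
qed

lemma expsum_mult_red: "expsum i (mult_red u v) = expsum i u + expsum i v"
  by (induct u) (simp_all add: expsum_cons_red, subst expsum_Cons, simp)

lemma expsum_winv: "expsum i (winv u) = - expsum i u"
  by (induct u) (auto simp: winv_def expsum_def flp_def)



lemma lmul_apply: "w \<in> FG d \<Longrightarrow> lmul d a w = mult_red a w"
  by (simp add: lmul_def)

lemma FG_reduced: "u \<in> FG d \<Longrightarrow> reduced u"
  by (simp add: FG_def)

lemma lmul_Bij: assumes a: "a \<in> FG d" shows "lmul d a \<in> Bij (FG d)"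
proof -
  have "bij_betw (lmul d a) (FG d) (FG d)"
  proof (rule bij_betw_byWitness[where f' = "lmul d (winv a)"])
    show "\<forall>x\<in>FG d. lmul d (winv a) (lmul d a x) = x"
      using a by (auto simp: lmul_apply mult_red_closed winv_closed
          mult_red_assoc[symmetric] FG_reduced winv_left)
    show "\<forall>x\<in>FG d. lmul d a (lmul d (winv a) x) = x"
      using a by (auto simp: lmul_apply mult_red_closed winv_closed
          mult_red_assoc[symmetric] FG_reduced winv_right winv_reduced)
    show "lmul d a ` FG d \<subseteq> FG d" using a by (auto simp: lmul_apply mult_red_closed)
    show "lmul d (winv a) ` FG d \<subseteq> FG d" using a
      by (auto simp: lmul_apply mult_red_closed winv_closed)
  qed
  then show ?thesis by (simp add: Bij_def lmul_def)
qed

lemma carrier_AutT: "carrier (AutT d) =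
  {f \<in> Bij (FG d). \<forall>u\<in>FG d. \<forall>v\<in>FG d. tree_adj d u v \<longleftrightarrow> tree_adj d (f u) (f v)}"
  by (simp add: AutT_def)

lemma mult_AutT: "f \<in> Bij (FG d) \<Longrightarrow> g \<in> Bij (FG d) \<Longrightarrow> f \<otimes>\<^bsub>AutT d\<^esub> g = compose (FG d) f g"
  by (simp add: AutT_def BijGroup_def)

lemma one_AutT: "\<one>\<^bsub>AutT d\<^esub> = (\<lambda>x\<in>FG d. x)"
  by (simp add: AutT_def BijGroup_def)

lemma Bij_into: "f \<in> Bij S \<Longrightarrow> x \<in> S \<Longrightarrow> f x \<in> S"
  using Bij_imp_funcset by blast

lemma subgroup_AutT: "subgroup (carrier (AutT d)) (BijGroup (FG d))"
proof (rule subgroup.intro)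
  show "carrier (AutT d) \<subseteq> carrier (BijGroup (FG d))"
    by (auto simp: carrier_AutT BijGroup_def)
next
  fix f g assume f: "f \<in> carrier (AutT d)" and g: "g \<in> carrier (AutT d)"
  then have fB: "f \<in> Bij (FG d)" and gB: "g \<in> Bij (FG d)" by (auto simp: carrier_AutT)
  have "compose (FG d) f g \<in> carrier (AutT d)"
    unfolding carrier_AutT
  proof (intro CollectI conjI ballI)
    show "compose (FG d) f g \<in> Bij (FG d)" using fB gB by (rule compose_Bij)
    fix u v assume u: "u \<in> FG d" and v: "v \<in> FG d"
    have gu: "g u \<in> FG d" "g v \<in> FG d" using gB u v by (auto intro: Bij_into)
    have "tree_adj d u v \<longleftrightarrow> tree_adj d (g u) (g v)" using g u v by (simp add: carrier_AutT)
    also have "\<dots> \<longleftrightarrow> tree_adj d (f (g u)) (f (g v))" using f gu by (simp add: carrier_AutT)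
    finally show "tree_adj d u v \<longleftrightarrow> tree_adj d (compose (FG d) f g u) (compose (FG d) f g v)"
      using u v by (simp add: compose_def)
  qed
  then show "f \<otimes>\<^bsub>BijGroup (FG d)\<^esub> g \<in> carrier (AutT d)"
    using fB gB by (simp add: BijGroup_def)
next
  show "\<one>\<^bsub>BijGroup (FG d)\<^esub> \<in> carrier (AutT d)"
    by (auto simp: carrier_AutT BijGroup_def id_Bij)
next
  fix f assume f: "f \<in> carrier (AutT d)"
  then have fB: "f \<in> Bij (FG d)" by (auto simp: carrier_AutT)
  have bb: "bij_betw f (FG d) (FG d)" using fB by (simp add: Bij_def)
  have "(\<lambda>x \<in> FG d. (inv_into (FG d) f) x) \<in> carrier (AutT d)"
  proof -
    { fix u v assume u: "u \<in> FG d" and v: "v \<in> FG d"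
      have iu: "inv_into (FG d) f u \<in> FG d" "inv_into (FG d) f v \<in> FG d"
        using u v fB by (auto intro: Bij_inv_into_mem)
      have "f (inv_into (FG d) f u) = u" "f (inv_into (FG d) f v) = v"
        using u v bb by (auto simp: bij_betw_inv_into_right)
      then have "tree_adj d u v \<longleftrightarrow> tree_adj d (inv_into (FG d) f u) (inv_into (FG d) f v)"
        using f iu by (auto simp: carrier_AutT) }
    then show ?thesis using fB by (auto simp: carrier_AutT restrict_inv_into_Bij)
  qed
  then show "inv\<^bsub>BijGroup (FG d)\<^esub> f \<in> carrier (AutT d)"
    using fB by (simp add: inv_BijGroup)
qed

lemma AutT_eq: "AutT d = (BijGroup (FG d))\<lparr>carrier := carrier (AutT d)\<rparr>"
  by (simp add: AutT_def)

lemma group_AutT: "group (AutT d)"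
  using subgroup.subgroup_is_group[OF subgroup_AutT group_BijGroup] AutT_eq by metis

lemma AutT_Bij: "f \<in> carrier (AutT d) \<Longrightarrow> f \<in> Bij (FG d)"
  by (simp add: carrier_AutT)

lemma AutT_adj: "f \<in> carrier (AutT d) \<Longrightarrow> u \<in> FG d \<Longrightarrow> v \<in> FG d \<Longrightarrow>
   tree_adj d u v \<longleftrightarrow> tree_adj d (f u) (f v)"
  by (simp add: carrier_AutT)

lemma AutT_inv_closed: "g \<in> carrier (AutT d) \<Longrightarrow> inv\<^bsub>AutT d\<^esub> g \<in> carrier (AutT d)"
  using group.inv_closed[OF group_AutT] by blast

lemma AutT_inv_left: assumes g: "g \<in> carrier (AutT d)" and x: "x \<in> FG d"
  shows "(inv\<^bsub>AutT d\<^esub> g) (g x) = x"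
proof -
  have "inv\<^bsub>AutT d\<^esub> g \<otimes>\<^bsub>AutT d\<^esub> g = \<one>\<^bsub>AutT d\<^esub>"
    using group.l_inv[OF group_AutT g] .
  then have "compose (FG d) (inv\<^bsub>AutT d\<^esub> g) g x = x"
    using AutT_Bij[OF AutT_inv_closed[OF g]] AutT_Bij[OF g] x
    by (simp add: mult_AutT one_AutT)
  then show ?thesis using x by (simp add: compose_def)
qed

lemma AutT_inv_right: assumes g: "g \<in> carrier (AutT d)" and x: "x \<in> FG d"
  shows "g ((inv\<^bsub>AutT d\<^esub> g) x) = x"
proof -
  have "g \<otimes>\<^bsub>AutT d\<^esub> inv\<^bsub>AutT d\<^esub> g = \<one>\<^bsub>AutT d\<^esub>"
    using group.r_inv[OF group_AutT g] .
  then have "compose (FG d) g (inv\<^bsub>AutT d\<^esub> g) x = x"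
    using AutT_Bij[OF AutT_inv_closed[OF g]] AutT_Bij[OF g] x
    by (simp add: mult_AutT one_AutT)
  then show ?thesis using x by (simp add: compose_def)
qed



definition Lts :: "nat \<Rightarrow> letter set" where "Lts d = {x. fst x < d}"

lemma Lts_eq: "Lts d = Sigma {..<d} (\<lambda>_. UNIV)"
  by (auto simp: Lts_def)

lemma finite_Lts: "finite (Lts d)"
  by (simp add: Lts_eq)

lemma single_FG: "l \<in> Lts d \<Longrightarrow> [l] \<in> FG d"
  by (simp add: FG_def Lts_def)

lemma Nil_FG: "[] \<in> FG d"
  by (simp add: FG_def)

lemma left_cancel:
  assumes "v \<in> FG d" "a \<in> FG d" "b \<in> FG d" "mult_red v a = mult_red v b"
  shows "a = b"
proof -
  have "mult_red (winv v) (mult_red v a) = mult_red (winv v) (mult_red v b)" using assms by simp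
  moreover have "\<And>c. c \<in> FG d \<Longrightarrow> mult_red (winv v) (mult_red v c) = c"
  proof -
    fix c assume c: "c \<in> FG d"
    have "mult_red (winv v) (mult_red v c) = mult_red (mult_red (winv v) v) c"
      using mult_red_assoc[of v c "winv v"] assms(1) c by (simp add: FG_reduced)
    then show "mult_red (winv v) (mult_red v c) = c" using assms(1) by (simp add: winv_left FG_reduced)
  qed
  ultimately show ?thesis using assms by metis
qed

lemma right_cancel:
  assumes "v \<in> FG d" "a \<in> FG d" "b \<in> FG d" "mult_red a v = mult_red b v"
  shows "a = b"
proof -
  have "mult_red (mult_red a v) (winv v) = mult_red (mult_red b v) (winv v)" using assms by simp
  moreover have "\<And>c. c \<in> FG d \<Longrightarrow> mult_red (mult_red c v) (winv v) = c"
  proof -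
    fix c assume c: "c \<in> FG d"
    have "mult_red (mult_red c v) (winv v) = mult_red c (mult_red v (winv v))"
      using mult_red_assoc[of v "winv v" c] assms(1) c by (simp add: FG_reduced winv_reduced)
    then show "mult_red (mult_red c v) (winv v) = c" using assms(1) c
      by (simp add: winv_right FG_reduced mult_red_Nil2)
  qed
  ultimately show ?thesis using assms by metis
qed

definition nbrs :: "nat \<Rightarrow> letter list \<Rightarrow> letter list set" where
  "nbrs d v = {u \<in> FG d. tree_adj d v u}"

lemma letter_bij: assumes v: "v \<in> FG d"
  shows "bij_betw (\<lambda>l. mult_red v [l]) (Lts d) (nbrs d v)"
proof (rule bij_betw_imageI)
  show "inj_on (\<lambda>l. mult_red v [l]) (Lts d)"
    using left_cancel[OF v] single_FG by (fastforce simp: inj_on_def)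
  show "(\<lambda>l. mult_red v [l]) ` Lts d = nbrs d v"
  proof
    show "(\<lambda>l. mult_red v [l]) ` Lts d \<subseteq> nbrs d v"
    proof
      fix u assume "u \<in> (\<lambda>l. mult_red v [l]) ` Lts d"
      then obtain l where l: "l \<in> Lts d" "u = mult_red v [l]" by blast
      then have "u \<in> FG d" using v mult_red_closed single_FG by blast
      moreover have "tree_adj d v u" using l by (cases l) (auto simp: tree_adj_def Lts_def)
      ultimately show "u \<in> nbrs d v" by (simp add: nbrs_def)
    qed
    show "nbrs d v \<subseteq> (\<lambda>l. mult_red v [l]) ` Lts d"
      by (force simp: nbrs_def tree_adj_def Lts_def)
  qed
qed

lemma aut_nbrs_bij: assumes p: "p \<in> carrier (AutT d)" and v: "v \<in> FG d"
  shows "bij_betw p (nbrs d v) (nbrs d (p v))"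
proof -
  have bb: "bij_betw p (FG d) (FG d)" using AutT_Bij[OF p] by (simp add: Bij_def)
  have pv: "p v \<in> FG d" using bb v bij_betwE by blast
  show ?thesis
  proof (rule bij_betw_imageI)
    show "inj_on p (nbrs d v)" using bb by (auto simp: nbrs_def bij_betw_def inj_on_def)
    show "p ` nbrs d v = nbrs d (p v)"
    proof
      show "p ` nbrs d v \<subseteq> nbrs d (p v)"
        using AutT_adj[OF p v] bb by (auto simp: nbrs_def dest: bij_betwE)
      show "nbrs d (p v) \<subseteq> p ` nbrs d v"
      proof
        fix u' assume "u' \<in> nbrs d (p v)"
        then have u': "u' \<in> FG d" "tree_adj d (p v) u'" by (auto simp: nbrs_def)
        then obtain u where u: "u \<in> FG d" "u' = p u" using bb by (auto simp: bij_betw_def)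
        then have "tree_adj d v u" using AutT_adj[OF p v u(1)] u' by simp
        then show "u' \<in> p ` nbrs d v" using u by (auto simp: nbrs_def)
      qed
    qed
  qed
qed

lemma aut_sum: assumes p: "p \<in> carrier (AutT d)" and v: "v \<in> FG d"
  shows "(\<Sum>l\<in>Lts d. f (p (mult_red v [l]))) = (\<Sum>l\<in>Lts d. f (mult_red (p v) [l]))"
proof -
  have pv: "p v \<in> FG d" using AutT_Bij[OF p] v by (rule Bij_into)
  have "(\<Sum>l\<in>Lts d. f (p (mult_red v [l]))) = (\<Sum>u\<in>nbrs d v. f (p u))"
    using sum.reindex_bij_betw[OF letter_bij[OF v], of "\<lambda>u. f (p u)"] by simp
  also have "\<dots> = (\<Sum>u\<in>nbrs d (p v). f u)"
    using sum.reindex_bij_betw[OF aut_nbrs_bij[OF p v], of f] by simp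
  also have "\<dots> = (\<Sum>l\<in>Lts d. f (mult_red (p v) [l]))"
    using sum.reindex_bij_betw[OF letter_bij[OF pv], of f] by simp
  finally show ?thesis .
qed

lemma sum_letters: "(\<Sum>l\<in>Lts d. expsum i [l]) = 0"
proof -
  have "(\<Sum>l\<in>Lts d. expsum i [l]) = (\<Sum>j<d. \<Sum>b\<in>UNIV. expsum i [(j, b)])"
    unfolding Lts_eq by (subst sum.Sigma) auto
  also have "\<dots> = 0" by (simp add: UNIV_bool expsum_def if_distrib cong: if_cong)
  finally show ?thesis .
qed

definition harm :: "nat \<Rightarrow> (letter list \<Rightarrow> int) \<Rightarrow> bool" where
  "harm d f \<longleftrightarrow> (\<forall>v\<in>FG d. (\<Sum>l\<in>Lts d. f (mult_red v [l]) - f v) = 0)"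

lemma aut_harm: assumes p: "p \<in> carrier (AutT d)"
  shows "harm d (\<lambda>v. expsum i (p v))"
  unfolding harm_def
proof
  fix v assume v: "v \<in> FG d"
  have "(\<Sum>l\<in>Lts d. expsum i (p (mult_red v [l])) - expsum i (p v))
     = (\<Sum>l\<in>Lts d. expsum i (mult_red (p v) [l])) - (\<Sum>l\<in>Lts d. expsum i (p v))"
    by (simp add: sum_subtractf aut_sum[OF p v])
  also have "\<dots> = 0"
    by (simp add: expsum_mult_red sum.distrib sum_letters)
  finally show "(\<Sum>l\<in>Lts d. expsum i (p (mult_red v [l])) - expsum i (p v)) = 0" .
qed

lemma snoc_FG: assumes "u @ [l] \<in> FG d"
  shows "u \<in> FG d" "l \<in> Lts d" "mult_red u [l] = u @ [l]"
proof -
  show "u \<in> FG d" using assms by (auto simp: FG_def reduced_snoc)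
  show "l \<in> Lts d" using assms by (auto simp: FG_def Lts_def)
  have r: "reduced (u @ [l])" using assms by (simp add: FG_def)
  have "u @ [l] = mult_red (u @ [l]) []" using mult_red_Nil2[OF r] by simp
  also have "\<dots> = mult_red u [l]" by (simp add: mult_red_append)
  finally show "mult_red u [l] = u @ [l]" by simp
qed

lemma FG_reach:
  assumes v0: "v0 \<in> FG d" and P0: "P v0"
    and step: "\<And>v l. v \<in> FG d \<Longrightarrow> P v \<Longrightarrow> l \<in> Lts d \<Longrightarrow> P (mult_red v [l])"
    and x: "x \<in> FG d"
  shows "P x"
proof -
  have main: "\<forall>u. u \<in> FG d \<longrightarrow> P (mult_red v0 u)"
  proof (intro allI)
    fix u show "u \<in> FG d \<longrightarrow> P (mult_red v0 u)"
    proof (induct u rule: rev_induct)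
      case Nil then show ?case using P0 v0 by (simp add: mult_red_Nil2 FG_reduced)
    next
      case (snoc l u)
      show ?case
      proof
        assume ul: "u @ [l] \<in> FG d"
        note s = snoc_FG[OF ul]
        have "mult_red (mult_red v0 u) [l] = mult_red v0 (mult_red u [l])"
          using mult_red_assoc[of u "[l]" v0] s(1) by (simp add: FG_reduced)
        then have eq: "mult_red v0 (u @ [l]) = mult_red (mult_red v0 u) [l]"
          using s(3) by simp
        have m: "mult_red v0 u \<in> FG d" using v0 s(1) by (rule mult_red_closed)
        have "P (mult_red v0 u)" using snoc s(1) by blast
        then show "P (mult_red v0 (u @ [l]))"
          using step[OF m _ s(2)] eq by simp
      qed
    qed
  qed
  have wx: "mult_red (winv v0) x \<in> FG d" using winv_closed[OF v0] x by (rule mult_red_closed)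
  have "mult_red v0 (mult_red (winv v0) x) = mult_red (mult_red v0 (winv v0)) x"
    using mult_red_assoc[of "winv v0" x v0] v0 x by (simp add: FG_reduced winv_reduced)
  also have "\<dots> = x" using v0 by (simp add: winv_right FG_reduced)
  finally have "mult_red v0 (mult_red (winv v0) x) = x" .
  then show ?thesis using main wx by metis
qed

lemma max_principle:
  assumes h: "harm d f" and fin: "finite (f ` FG d)"
  shows "\<forall>v\<in>FG d. f v = f []"
proof -
  define M where "M = Max (f ` FG d)"
  have ne: "f ` FG d \<noteq> {}" using Nil_FG by blast
  have le: "f v \<le> M" if "v \<in> FG d" for v
    unfolding M_def using fin that by (intro Max_ge) auto
  obtain v0 where v0: "v0 \<in> FG d" "f v0 = M"
    using Max_in[OF fin ne] unfolding M_def by auto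
  have step: "f (mult_red v [l]) = M" if v: "v \<in> FG d" "f v = M" "l \<in> Lts d" for v l
  proof -
    have s0: "(\<Sum>l\<in>Lts d. f (mult_red v [l]) - f v) = 0"
      using h v(1) unfolding harm_def by blast
    have "(\<Sum>l\<in>Lts d. f v - f (mult_red v [l])) = - (\<Sum>l\<in>Lts d. f (mult_red v [l]) - f v)"
      by (simp add: sum_subtractf)
    then have s1: "(\<Sum>l\<in>Lts d. f v - f (mult_red v [l])) = 0" using s0 by simp
    have nn: "\<forall>l\<in>Lts d. 0 \<le> f v - f (mult_red v [l])"
    proof
      fix l assume "l \<in> Lts d"
      then have "mult_red v [l] \<in> FG d" using mult_red_closed[OF v(1) single_FG] by simp
      then have "f (mult_red v [l]) \<le> M" by (rule le)
      then show "0 \<le> f v - f (mult_red v [l])" using v(2) by linarith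
    qed
    have "\<forall>l\<in>Lts d. f v - f (mult_red v [l]) = 0"
      using iffD1[OF sum_nonneg_eq_0_iff[OF finite_Lts] s1] nn by blast
    then show ?thesis using v(2,3) by simp
  qed
  have all: "f x = M" if x: "x \<in> FG d" for x
  proof (rule FG_reach[of v0 d "\<lambda>v. f v = M", OF v0(1) v0(2)])
    show "\<And>v l. v \<in> FG d \<Longrightarrow> f v = M \<Longrightarrow> l \<in> Lts d \<Longrightarrow> f (mult_red v [l]) = M"
      by (rule step)
    show "x \<in> FG d" by (rule x)
  qed
  then show ?thesis using Nil_FG by auto
qed



definition Ep :: "nat \<Rightarrow> (letter list \<Rightarrow> letter list) \<Rightarrow> letter list set" where
  "Ep d p = {e \<in> FG d. \<exists>a\<in>FG d. \<forall>v\<in>FG d. p (mult_red e v) = mult_red a (p v)}"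

definition Kw :: "nat \<Rightarrow> letter list set" where
  "Kw d = {w \<in> FG d. \<forall>i<d. expsum i w = 0}"

definition pw :: "letter list \<Rightarrow> nat \<Rightarrow> letter list" where
  "pw k n = (mult_red k ^^ n) []"

lemma pw_0[simp]: "pw k 0 = []" by (simp add: pw_def)
lemma pw_Suc: "pw k (Suc n) = mult_red k (pw k n)" by (simp add: pw_def)

lemma pw_FG: "k \<in> FG d \<Longrightarrow> pw k n \<in> FG d"
  by (induct n) (auto simp: pw_Suc Nil_FG mult_red_closed)

lemma pw_add: "k \<in> FG d \<Longrightarrow> pw k (a + b) = mult_red (pw k a) (pw k b)"
proof (induct a)
  case 0 then show ?case by simp
next
  case (Suc a)
  then show ?case
    using mult_red_assoc[of "pw k a" "pw k b" k] FG_reduced[OF pw_FG[OF Suc.prems]]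
    by (simp add: pw_Suc)
qed

lemma expsum_pw: "expsum i (pw k n) = int n * expsum i k"
  by (induct n) (auto simp: pw_Suc expsum_mult_red algebra_simps)

lemma pw_Kw: "k \<in> Kw d \<Longrightarrow> pw k n \<in> Kw d"
  by (auto simp: Kw_def pw_FG expsum_pw)

lemma finite_image_factor:
  assumes "finite (lab ` A)" "\<And>x y. x \<in> A \<Longrightarrow> y \<in> A \<Longrightarrow> lab x = lab y \<Longrightarrow> F x = F y"
  shows "finite (F ` A)"
proof -
  have "F ` A \<subseteq> (\<lambda>q. F (SOME x. x \<in> A \<and> lab x = q)) ` (lab ` A)"
  proof
    fix z assume "z \<in> F ` A"
    then obtain x where x: "x \<in> A" "z = F x" by blast
    have ex: "\<exists>y. y \<in> A \<and> lab y = lab x" using x by blast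
    have "F (SOME y. y \<in> A \<and> lab y = lab x) = F x"
      using someI_ex[OF ex] assms(2) x(1) by blast
    then show "z \<in> (\<lambda>q. F (SOME x. x \<in> A \<and> lab x = q)) ` (lab ` A)" using x by force
  qed
  then show ?thesis using assms(1) finite_subset by blast
qed

context
  fixes d :: nat and p :: "letter list \<Rightarrow> letter list" and E EK :: "letter list set"
  assumes p: "p \<in> carrier (AutT d)"
    and E_sub: "E \<subseteq> Ep d p" and E_Nil: "[] \<in> E"
    and E_fin: "finite {(\<lambda>e. mult_red e y) ` E | y. y \<in> FG d}"
    and EK_sub: "EK \<subseteq> Kw d" and EK_Nil: "[] \<in> EK"
    and EK_prop: "\<And>e v i. e \<in> EK \<Longrightarrow> v \<in> FG d \<Longrightarrow> i < d \<Longrightarrow>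
                    expsum i (p (mult_red e v)) = expsum i (p v)"
    and EK_fin: "finite {(\<lambda>e. mult_red e y) ` EK | y. y \<in> Kw d}"
begin

lemma p_into: "v \<in> FG d \<Longrightarrow> p v \<in> FG d"
  using AutT_Bij[OF p] by (rule Bij_into)

definition th :: "nat \<Rightarrow> letter list \<Rightarrow> int" where
  "th i e = expsum i (p e) - expsum i (p [])"

lemma Ep_psi: assumes e: "e \<in> Ep d p" and v: "v \<in> FG d"
  shows "expsum i (p (mult_red e v)) = expsum i (p v) + th i e"
proof -
  obtain a where a: "a \<in> FG d" "\<forall>v\<in>FG d. p (mult_red e v) = mult_red a (p v)"
    using e by (auto simp: Ep_def)
  have ef: "e \<in> FG d" using e by (simp add: Ep_def)
  have "p e = mult_red a (p [])" using a(2) Nil_FG ef by (metis FG_reduced mult_red_Nil2)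
  then show ?thesis using a v by (simp add: th_def expsum_mult_red)
qed

lemma Ep_mult: assumes "e1 \<in> Ep d p" "e2 \<in> Ep d p" shows "mult_red e1 e2 \<in> Ep d p"
proof -
  obtain a1 where a1: "a1 \<in> FG d" "\<forall>v\<in>FG d. p (mult_red e1 v) = mult_red a1 (p v)"
    using assms(1) by (auto simp: Ep_def)
  obtain a2 where a2: "a2 \<in> FG d" "\<forall>v\<in>FG d. p (mult_red e2 v) = mult_red a2 (p v)"
    using assms(2) by (auto simp: Ep_def)
  have f: "e1 \<in> FG d" "e2 \<in> FG d" using assms by (auto simp: Ep_def)
  have "\<forall>v\<in>FG d. p (mult_red (mult_red e1 e2) v) = mult_red (mult_red a1 a2) (p v)"
  proof
    fix v assume v: "v \<in> FG d"
    have "p (mult_red (mult_red e1 e2) v) = p (mult_red e1 (mult_red e2 v))"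
      using f v by (simp add: mult_red_assoc FG_reduced)
    also have "\<dots> = mult_red a1 (mult_red a2 (p v))"
      using a1 a2 v f mult_red_closed by simp
    also have "\<dots> = mult_red (mult_red a1 a2) (p v)"
      using mult_red_assoc[of a2 "p v" a1] FG_reduced[OF a2(1)] FG_reduced[OF p_into[OF v]] by simp
    finally show "p (mult_red (mult_red e1 e2) v) = mult_red (mult_red a1 a2) (p v)" .
  qed
  then show ?thesis using f a1 a2 by (auto simp: Ep_def mult_red_closed)
qed

lemma Ep_winv: assumes "e \<in> Ep d p" shows "winv e \<in> Ep d p"
proof -
  obtain a where a: "a \<in> FG d" "\<forall>v\<in>FG d. p (mult_red e v) = mult_red a (p v)"
    using assms by (auto simp: Ep_def)
  have f: "e \<in> FG d" using assms by (auto simp: Ep_def)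
  have "\<forall>v\<in>FG d. p (mult_red (winv e) v) = mult_red (winv a) (p v)"
  proof
    fix v assume v: "v \<in> FG d"
    have w: "mult_red (winv e) v \<in> FG d" using f v winv_closed mult_red_closed by blast
    have "mult_red e (mult_red (winv e) v) = v"
      using f v by (simp add: mult_red_assoc[symmetric] FG_reduced winv_reduced winv_right)
    then have "p v = mult_red a (p (mult_red (winv e) v))" using a w by metis
    then have "mult_red (winv a) (p v) = mult_red (mult_red (winv a) a) (p (mult_red (winv e) v))"
      using a(1) p_into[OF w] by (simp add: mult_red_assoc FG_reduced)
    then show "p (mult_red (winv e) v) = mult_red (winv a) (p v)"
      using a(1) by (simp add: winv_left FG_reduced)
  qed
  then show ?thesis using f a winv_closed by (auto simp: Ep_def)
qed

lemma Ep_pw_psi: assumes k: "k \<in> Ep d p"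
  shows "expsum i (p (pw k m)) = expsum i (p []) + int m * th i k"
proof (induct m)
  case 0 then show ?case by simp
next
  case (Suc m)
  have kf: "k \<in> FG d" using k by (simp add: Ep_def)
  have "expsum i (p (pw k (Suc m))) = expsum i (p (pw k m)) + th i k"
    using Ep_psi[OF k pw_FG[OF kf]] by (simp add: pw_Suc)
  then show ?case using Suc by (simp add: algebra_simps)
qed

lemma th_K: assumes k: "k \<in> Ep d p" "k \<in> Kw d" and i: "i < d"
  shows "th i k = 0"
proof -
  have kf: "k \<in> FG d" using k by (simp add: Ep_def)
  define f where "f n = (\<lambda>e. mult_red e (pw k n)) ` EK" for n
  have "range f \<subseteq> {(\<lambda>e. mult_red e y) ` EK | y. y \<in> Kw d}"
    using pw_Kw[OF k(2)] by (auto simp: f_def)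
  then have "finite (range f)" using EK_fin finite_subset by blast
  then have "\<not> inj f" using finite_imageD infinite_UNIV_nat by blast
  then obtain a b where ab: "a \<noteq> b" "f a = f b" by (auto simp: inj_def)
  have "\<exists>a b. a < b \<and> f a = f b"
    using ab by (metis linorder_neqE_nat)
  then obtain a b where ab: "a < b" "f a = f b" by blast
  have "pw k b \<in> f b" unfolding f_def by (rule image_eqI[where x="[]"]) (simp_all add: EK_Nil)
  then have "pw k b \<in> f a" using ab by simp
  then obtain e where e: "e \<in> EK" "pw k b = mult_red e (pw k a)" by (auto simp: f_def)
  have ef: "e \<in> FG d" using e EK_sub by (auto simp: Kw_def)
  have "pw k b = mult_red (pw k (b - a)) (pw k a)"
    using pw_add[OF kf, of "b - a" a] ab by simp
  then have "e = pw k (b - a)"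
    using right_cancel[OF pw_FG[OF kf] ef pw_FG[OF kf]] e by metis
  then have "expsum i (p (mult_red (pw k (b - a)) [])) = expsum i (p [])"
    using EK_prop[OF e(1) Nil_FG i] by simp
  then have "expsum i (p (pw k (b - a))) = expsum i (p [])"
    using mult_red_Nil2[OF FG_reduced[OF pw_FG[OF kf]]] by simp
  then have "int (b - a) * th i k = 0" using Ep_pw_psi[OF k(1)] by simp
  then show ?thesis using ab by simp
qed

lemma th_eq: assumes e: "e1 \<in> Ep d p" "e2 \<in> Ep d p"
  and eq: "\<forall>j<d. expsum j e1 = expsum j e2" and i: "i < d"
  shows "th i e1 = th i e2"
proof -
  define k where "k = mult_red e1 (winv e2)"
  have f: "e1 \<in> FG d" "e2 \<in> FG d" using e by (auto simp: Ep_def)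
  have kE: "k \<in> Ep d p" using Ep_mult[OF e(1) Ep_winv[OF e(2)]] by (simp add: k_def)
  have kK: "k \<in> Kw d" using eq f winv_closed mult_red_closed
    by (auto simp: k_def Kw_def expsum_mult_red expsum_winv)
  have "mult_red k e2 = e1"
    using f by (simp add: k_def mult_red_assoc FG_reduced winv_reduced winv_left mult_red_Nil2)
  then have "expsum i (p e1) = expsum i (p e2) + th i k" using Ep_psi[OF kE f(2)] by simp
  then show ?thesis using th_K[OF kE kK i] by (simp add: th_def)
qed

lemma F_finite: assumes g: "g \<in> FG d" and i: "i < d"
  shows "finite ((\<lambda>v. expsum i (p (mult_red g v)) - expsum i (p v)) ` FG d)"
proof (rule finite_image_factor)
  define R where "R = {(\<lambda>e. mult_red e y) ` E | y. y \<in> FG d}"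
  let ?lab = "\<lambda>v. ((\<lambda>e. mult_red e v) ` E, (\<lambda>e. mult_red e (mult_red g v)) ` E)"
  have "?lab ` FG d \<subseteq> R \<times> R" using g by (auto simp: R_def mult_red_closed)
  then show "finite (?lab ` FG d)" using E_fin finite_subset unfolding R_def by blast
next
  fix v v' assume v: "v \<in> FG d" and v': "v' \<in> FG d"
    and lab: "((\<lambda>e. mult_red e v) ` E, (\<lambda>e. mult_red e (mult_red g v)) ` E) =
              ((\<lambda>e. mult_red e v') ` E, (\<lambda>e. mult_red e (mult_red g v')) ` E)"
  have "v' \<in> (\<lambda>e. mult_red e v') ` E" using E_Nil by force
  then have "v' \<in> (\<lambda>e. mult_red e v) ` E" using lab by simp
  then obtain e where e: "e \<in> E" "v' = mult_red e v" by blast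
  have "mult_red g v' \<in> (\<lambda>e. mult_red e (mult_red g v')) ` E" using E_Nil by force
  then have "mult_red g v' \<in> (\<lambda>e. mult_red e (mult_red g v)) ` E" using lab by simp
  then obtain e' where e': "e' \<in> E" "mult_red g v' = mult_red e' (mult_red g v)" by blast
  have eE: "e \<in> Ep d p" "e' \<in> Ep d p" using e e' E_sub by auto
  have gv: "mult_red g v \<in> FG d" using g v by (rule mult_red_closed)
  have "\<forall>j<d. expsum j e = expsum j e'"
  proof (intro allI impI)
    fix j
    have "expsum j (mult_red g v') = expsum j (mult_red e' (mult_red g v))" using e'(2) by simp
    then show "expsum j e = expsum j e'" using e(2) by (simp add: expsum_mult_red)
  qed
  then have "th i e = th i e'" using th_eq[OF eE _ i] by blast
  then show "expsum i (p (mult_red g v)) - expsum i (p v) =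
             expsum i (p (mult_red g v')) - expsum i (p v')"
    using Ep_psi[OF eE(1) v, of i] Ep_psi[OF eE(2) gv, of i] e(2) e'(2) by simp
qed

lemma F_harm: assumes g: "g \<in> FG d"
  shows "harm d (\<lambda>v. expsum i (p (mult_red g v)) - expsum i (p v))"
  unfolding harm_def
proof
  fix v assume v: "v \<in> FG d"
  have gv: "mult_red g v \<in> FG d" using g v by (rule mult_red_closed)
  have eq: "\<And>l. l \<in> Lts d \<Longrightarrow> mult_red g (mult_red v [l]) = mult_red (mult_red g v) [l]"
    using v by (simp add: mult_red_assoc FG_reduced single_FG)
  have h1: "(\<Sum>l\<in>Lts d. expsum i (p (mult_red (mult_red g v) [l])) - expsum i (p (mult_red g v))) = 0"
    using aut_harm[OF p, of i] gv unfolding harm_def by blast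
  have h2: "(\<Sum>l\<in>Lts d. expsum i (p (mult_red v [l])) - expsum i (p v)) = 0"
    using aut_harm[OF p, of i] v unfolding harm_def by blast
  have "(\<Sum>l\<in>Lts d. (expsum i (p (mult_red g (mult_red v [l]))) - expsum i (p (mult_red v [l])))
        - (expsum i (p (mult_red g v)) - expsum i (p v)))
      = (\<Sum>l\<in>Lts d. (expsum i (p (mult_red (mult_red g v) [l])) - expsum i (p (mult_red g v)))
        - (expsum i (p (mult_red v [l])) - expsum i (p v)))"
    by (rule sum.cong) (auto simp: eq)
  also have "\<dots> = 0" using h1 h2 by (simp add: sum_subtractf)
  finally show "(\<Sum>l\<in>Lts d. (expsum i (p (mult_red g (mult_red v [l]))) - expsum i (p (mult_red v [l])))
        - (expsum i (p (mult_red g v)) - expsum i (p v))) = 0" .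
qed

lemma const_incr: assumes g: "g \<in> FG d" and v: "v \<in> FG d" and i: "i < d"
  shows "expsum i (p (mult_red g v)) = expsum i (p v) + expsum i (p g) - expsum i (p [])"
proof -
  have "\<forall>v\<in>FG d. expsum i (p (mult_red g v)) - expsum i (p v)
       = expsum i (p (mult_red g [])) - expsum i (p [])"
    using max_principle[OF F_harm[OF g] F_finite[OF g i]] by blast
  then have "expsum i (p (mult_red g v)) - expsum i (p v)
       = expsum i (p (mult_red g [])) - expsum i (p [])" using v by blast
  then show ?thesis using g by (simp add: mult_red_Nil2 FG_reduced)
qed

end



lemma lmul_inj: "a \<in> FG d \<Longrightarrow> b \<in> FG d \<Longrightarrow> lmul d a = lmul d b \<Longrightarrow> a = b"
  by (metis Nil_FG lmul_apply mult_red_Nil2 FG_reduced)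

lemma lmul_Nil: "lmul d [] = \<one>\<^bsub>AutT d\<^esub>"
  by (simp add: lmul_def one_AutT)

lemma conj_apply:
  assumes g: "g \<in> carrier (AutT d)" and a: "a \<in> FG d" and v: "v \<in> FG d"
  shows "(g \<otimes>\<^bsub>AutT d\<^esub> lmul d a \<otimes>\<^bsub>AutT d\<^esub> inv\<^bsub>AutT d\<^esub> g) v
         = g (mult_red a ((inv\<^bsub>AutT d\<^esub> g) v))"
proof -
  have gB: "g \<in> Bij (FG d)" using AutT_Bij[OF g] .
  have iB: "inv\<^bsub>AutT d\<^esub> g \<in> Bij (FG d)" using AutT_Bij[OF AutT_inv_closed[OF g]] .
  have aB: "lmul d a \<in> Bij (FG d)" using lmul_Bij[OF a] .
  have gaB: "g \<otimes>\<^bsub>AutT d\<^esub> lmul d a \<in> Bij (FG d)"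
    using gB aB by (simp add: mult_AutT compose_Bij)
  have iv: "(inv\<^bsub>AutT d\<^esub> g) v \<in> FG d" using iB v by (rule Bij_into)
  show ?thesis using gB aB iB gaB v iv
    by (simp add: mult_AutT compose_def lmul_apply mult_red_closed[OF a iv])
qed

context
  fixes d :: nat and g :: "letter list \<Rightarrow> letter list" and A0 :: "letter list set"
  assumes g: "g \<in> carrier (AutT d)" and A0: "A0 \<subseteq> FG d"
begin

definition HH where "HH = conj_set (AutT d) g (lmul d ` A0) \<inter> lmul d ` A0"
definition EE where "EE = {e \<in> FG d. lmul d e \<in> HH}"

lemma EE_prop: assumes e: "e \<in> EE"
  shows "e \<in> A0 \<and> (\<exists>a\<in>A0. \<forall>v\<in>FG d. (inv\<^bsub>AutT d\<^esub> g) (mult_red e v) = mult_red a ((inv\<^bsub>AutT d\<^esub> g) v))"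
proof
  have ef: "e \<in> FG d" and h: "lmul d e \<in> HH" using e by (auto simp: EE_def)
  then obtain e' where e': "e' \<in> A0" "lmul d e = lmul d e'" by (auto simp: HH_def)
  then show "e \<in> A0" using lmul_inj[OF ef] A0 by auto
  obtain a where a: "a \<in> A0" "lmul d e = g \<otimes>\<^bsub>AutT d\<^esub> lmul d a \<otimes>\<^bsub>AutT d\<^esub> inv\<^bsub>AutT d\<^esub> g"
    using h by (auto simp: HH_def conj_set_def)
  have af: "a \<in> FG d" using a A0 by auto
  let ?p = "inv\<^bsub>AutT d\<^esub> g"
  have "\<forall>v\<in>FG d. ?p (mult_red e v) = mult_red a (?p v)"
  proof
    fix v assume v: "v \<in> FG d"
    have pv: "?p v \<in> FG d" using AutT_Bij[OF AutT_inv_closed[OF g]] v by (rule Bij_into)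
    have "mult_red e v = g (mult_red a (?p v))"
      using conj_apply[OF g af v] a(2) lmul_apply[OF v, of e] by simp
    then show "?p (mult_red e v) = mult_red a (?p v)"
      using AutT_inv_left[OF g mult_red_closed[OF af pv]] by simp
  qed
  then show "\<exists>a\<in>A0. \<forall>v\<in>FG d. ?p (mult_red e v) = mult_red a (?p v)" using a(1) by blast
qed

lemma EE_Nil: assumes "[] \<in> A0" shows "[] \<in> EE"
proof -
  interpret G: group "AutT d" by (rule group_AutT)
  have "g \<otimes>\<^bsub>AutT d\<^esub> lmul d [] \<otimes>\<^bsub>AutT d\<^esub> inv\<^bsub>AutT d\<^esub> g = lmul d []"
    using g by (simp add: lmul_Nil)
  then have "lmul d [] \<in> conj_set (AutT d) g (lmul d ` A0)"
    using assms unfolding conj_set_def by force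
  then show ?thesis using assms Nil_FG by (auto simp: EE_def HH_def)
qed

lemma EE_fin: assumes fi: "finite_index (AutT d) HH (lmul d ` A0)"
  shows "finite {(\<lambda>e. mult_red e y) ` EE | y. y \<in> A0}"
proof -
  let ?G = "(AutT d)\<lparr>carrier := lmul d ` A0\<rparr>"
  have fin: "finite (rcosets\<^bsub>?G\<^esub> HH)" using fi by (simp add: finite_index_def)
  have "{(\<lambda>e. mult_red e y) ` EE | y. y \<in> A0} \<subseteq> (\<lambda>S. (\<lambda>f. f []) ` S) ` (rcosets\<^bsub>?G\<^esub> HH)"
  proof
    fix X assume "X \<in> {(\<lambda>e. mult_red e y) ` EE | y. y \<in> A0}"
    then obtain y where y: "y \<in> A0" "X = (\<lambda>e. mult_red e y) ` EE" by blast
    have yf: "y \<in> FG d" using y A0 by auto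
    have "X = (\<lambda>f. f []) ` (HH #>\<^bsub>?G\<^esub> lmul d y)"
    proof
      show "X \<subseteq> (\<lambda>f. f []) ` (HH #>\<^bsub>?G\<^esub> lmul d y)"
      proof
        fix x assume "x \<in> X"
        then obtain e where e: "e \<in> EE" "x = mult_red e y" using y by blast
        have ef: "e \<in> FG d" "lmul d e \<in> HH" using e by (auto simp: EE_def)
        have "(lmul d e \<otimes>\<^bsub>AutT d\<^esub> lmul d y) [] = x"
          using e ef yf lmul_Bij[OF ef(1)] lmul_Bij[OF yf] Nil_FG
          by (simp add: mult_AutT compose_def lmul_apply mult_red_Nil2 FG_reduced)
        moreover have "lmul d e \<otimes>\<^bsub>AutT d\<^esub> lmul d y \<in> HH #>\<^bsub>?G\<^esub> lmul d y"
          using ef by (auto simp: r_coset_def)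
        ultimately show "x \<in> (\<lambda>f. f []) ` (HH #>\<^bsub>?G\<^esub> lmul d y)" by force
      qed
      show "(\<lambda>f. f []) ` (HH #>\<^bsub>?G\<^esub> lmul d y) \<subseteq> X"
      proof
        fix x assume "x \<in> (\<lambda>f. f []) ` (HH #>\<^bsub>?G\<^esub> lmul d y)"
        then obtain h where h: "h \<in> HH" "x = (h \<otimes>\<^bsub>AutT d\<^esub> lmul d y) []"
          by (auto simp: r_coset_def)
        then obtain e where e: "e \<in> A0" "h = lmul d e" by (auto simp: HH_def)
        have ef: "e \<in> FG d" using e A0 by auto
        have eE: "e \<in> EE" using h e ef by (auto simp: EE_def)
        have "x = mult_red e y"
          using h e ef yf lmul_Bij[OF ef] lmul_Bij[OF yf] Nil_FG
          by (simp add: mult_AutT compose_def lmul_apply mult_red_Nil2 FG_reduced)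
        then show "x \<in> X" using eE y by blast
      qed
    qed
    moreover have "HH #>\<^bsub>?G\<^esub> lmul d y \<in> rcosets\<^bsub>?G\<^esub> HH"
      using y by (auto simp: RCOSETS_def)
    ultimately show "X \<in> (\<lambda>S. (\<lambda>f. f []) ` S) ` (rcosets\<^bsub>?G\<^esub> HH)" by blast
  qed
  then show ?thesis using fin finite_subset by blast
qed

end




lemma letter_eq: assumes "m \<in> Lts d" "m' \<in> Lts d" "\<forall>i<d. expsum i [m] = expsum i [m']"
  shows "m = m'"
proof -
  obtain j b where m: "m = (j, b)" by (cases m)
  obtain j' b' where m': "m' = (j', b')" by (cases m')
  have j: "j < d" using assms(1) m by (simp add: Lts_def)
  have "expsum j [m] = expsum j [m']" using assms(3) j by blast
  then show ?thesis using m m' by (auto simp: expsum_def split: if_splits)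
qed

lemma determ:
  assumes p: "p \<in> carrier (AutT d)" and q: "q \<in> carrier (AutT d)"
    and Cp: "\<And>g v i. g \<in> FG d \<Longrightarrow> v \<in> FG d \<Longrightarrow> i < d \<Longrightarrow>
         expsum i (p (mult_red g v)) = expsum i (p v) + expsum i (p g) - expsum i (p [])"
    and Cq: "\<And>g v i. g \<in> FG d \<Longrightarrow> v \<in> FG d \<Longrightarrow> i < d \<Longrightarrow>
         expsum i (q (mult_red g v)) = expsum i (q v) + expsum i (q g) - expsum i (q [])"
    and w: "w \<in> FG d" and pw: "p w = q w"
    and pwl: "\<And>l. l \<in> Lts d \<Longrightarrow> p (mult_red w [l]) = q (mult_red w [l])"
  shows "p = q"
proof -
  have D: "expsum i (r (mult_red x [l])) - expsum i (r x) = expsum i (r [l]) - expsum i (r [])"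
    if r: "\<And>g v i. g \<in> FG d \<Longrightarrow> v \<in> FG d \<Longrightarrow> i < d \<Longrightarrow>
         expsum i (r (mult_red g v)) = expsum i (r v) + expsum i (r g) - expsum i (r [])"
    and x: "x \<in> FG d" and l: "l \<in> Lts d" and i: "i < d" for r x l i
    using r[OF x single_FG[OF l] i] by simp
  have step: "p (mult_red x [l]) = q (mult_red x [l])"
    if x: "x \<in> FG d" and px: "p x = q x" and l: "l \<in> Lts d" for x l
  proof -
    have xl: "mult_red x [l] \<in> FG d" using x single_FG[OF l] by (rule mult_red_closed)
    have adj: "tree_adj d x (mult_red x [l])" using l by (cases l) (auto simp: tree_adj_def Lts_def)
    have pa: "tree_adj d (p x) (p (mult_red x [l]))" using AutT_adj[OF p x xl] adj by simp
    have qa: "tree_adj d (q x) (q (mult_red x [l]))" using AutT_adj[OF q x xl] adj by simp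
    obtain j b where m: "j < d" "p (mult_red x [l]) = mult_red (p x) [(j, b)]"
      using pa by (auto simp: tree_adj_def)
    obtain j' b' where m': "j' < d" "q (mult_red x [l]) = mult_red (q x) [(j', b')]"
      using qa by (auto simp: tree_adj_def)
    have "\<forall>i<d. expsum i [(j, b)] = expsum i [(j', b')]"
    proof (intro allI impI)
      fix i assume i: "i < d"
      have "expsum i [(j, b)] = expsum i (p (mult_red x [l])) - expsum i (p x)"
        using m by (simp add: expsum_mult_red)
      also have "\<dots> = expsum i (p (mult_red w [l])) - expsum i (p w)"
        using D[of p, OF Cp x l i] D[of p, OF Cp w l i] by simp
      also have "\<dots> = expsum i (q (mult_red w [l])) - expsum i (q w)"
        using pw pwl[OF l] by simp
      also have "\<dots> = expsum i (q (mult_red x [l])) - expsum i (q x)"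
        using D[of q, OF Cq x l i] D[of q, OF Cq w l i] by simp
      also have "\<dots> = expsum i [(j', b')]"
        using m' by (simp add: expsum_mult_red)
      finally show "expsum i [(j, b)] = expsum i [(j', b')]" .
    qed
    then have "(j, b) = (j', b')" using letter_eq[of "(j, b)" d "(j', b')"] m(1) m'(1) by (simp add: Lts_def)
    then show ?thesis using m m' px by simp
  qed
  have all: "p x = q x" if x: "x \<in> FG d" for x
    using FG_reach[of w d "\<lambda>x. p x = q x", OF w pw step x] by blast
  show ?thesis
    using all AutT_Bij[OF p] AutT_Bij[OF q] Bij_imp_extensional extensionalityI by metis
qed



lemma Kd_eq: "Kd d = lmul d ` Kw d"
  by (simp add: Kd_def Kw_def)

lemma Kw_sub: "Kw d \<subseteq> FG d"
  by (auto simp: Kw_def)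

lemma Nil_Kw: "[] \<in> Kw d"
  by (simp add: Kw_def Nil_FG)

lemma inv_const_incr:
  assumes gS: "g \<in> Comm (AutT d) (Kd d) \<inter> Comm (AutT d) (Gamma d)"
    and gv: "x \<in> FG d" "v \<in> FG d" and i: "i < d"
  shows "expsum i ((inv\<^bsub>AutT d\<^esub> g) (mult_red x v)) =
     expsum i ((inv\<^bsub>AutT d\<^esub> g) v) + expsum i ((inv\<^bsub>AutT d\<^esub> g) x)
     - expsum i ((inv\<^bsub>AutT d\<^esub> g) [])"
proof -
  let ?p = "inv\<^bsub>AutT d\<^esub> g"
  have g: "g \<in> carrier (AutT d)" using gS by (auto simp: Comm_def)
  have fiG: "finite_index (AutT d) (HH d g (FG d)) (lmul d ` FG d)"
    using gS g by (simp add: Comm_def HH_def Gamma_def)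
  have fiK: "finite_index (AutT d) (HH d g (Kw d)) (lmul d ` Kw d)"
    using gS g Kw_sub by (simp add: Comm_def HH_def Kd_eq)
  show ?thesis
  proof (rule const_incr[of ?p d "EE d g (FG d)" "EE d g (Kw d)"])
    show "?p \<in> carrier (AutT d)" using AutT_inv_closed[OF g] .
    show "EE d g (FG d) \<subseteq> Ep d ?p"
      using EE_prop[OF g subset_refl] by (auto simp: Ep_def)
    show "[] \<in> EE d g (FG d)" using EE_Nil[OF g subset_refl Nil_FG] .
    show "finite {(\<lambda>e. mult_red e y) ` EE d g (FG d) |y. y \<in> FG d}"
      using EE_fin[OF g subset_refl fiG] .
    show "EE d g (Kw d) \<subseteq> Kw d" using EE_prop[OF g Kw_sub] by blast
    show "[] \<in> EE d g (Kw d)" using EE_Nil[OF g Kw_sub Nil_Kw] .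
    show "finite {(\<lambda>e. mult_red e y) ` EE d g (Kw d) |y. y \<in> Kw d}"
      using EE_fin[OF g Kw_sub fiK] .
    show "expsum j (?p (mult_red e w)) = expsum j (?p w)"
      if e: "e \<in> EE d g (Kw d)" and w: "w \<in> FG d" and j: "j < d" for e w j
    proof -
      obtain a where a: "a \<in> Kw d" "\<forall>v\<in>FG d. ?p (mult_red e v) = mult_red a (?p v)"
        using EE_prop[OF g Kw_sub e] by blast
      have "expsum j a = 0" using a(1) j by (simp add: Kw_def)
      then show ?thesis using a(2) w by (simp add: expsum_mult_red)
    qed
  qed (use gv i in auto)
qed

theorem proposition5p11:
  fixes d :: nat
  assumes "d \<ge> 1"
  shows "discrete_in_AutT d (Comm (AutT d) (Kd d) \<inter> Comm (AutT d) (Gamma d))"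
  unfolding discrete_in_AutT_def
proof
  let ?S = "Comm (AutT d) (Kd d) \<inter> Comm (AutT d) (Gamma d)"
  fix g assume gS: "g \<in> ?S"
  have g: "g \<in> carrier (AutT d)" using gS by (auto simp: Comm_def)
  define F where "F = insert [] ((\<lambda>l. [l]) ` Lts d)"
  have finF: "finite F" using finite_Lts by (simp add: F_def)
  have subF: "F \<subseteq> FG d" using Nil_FG single_FG by (auto simp: F_def)
  have "\<forall>h\<in>?S. (\<forall>x\<in>F. h x = g x) \<longrightarrow> h = g"
  proof (intro ballI impI)
    fix h assume hS: "h \<in> ?S" and agree: "\<forall>x\<in>F. h x = g x"
    have h: "h \<in> carrier (AutT d)" using hS by (auto simp: Comm_def)
    let ?p = "inv\<^bsub>AutT d\<^esub> g" and ?q = "inv\<^bsub>AutT d\<^esub> h"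
    define w where "w = g []"
    have wf: "w \<in> FG d" using AutT_Bij[OF g] Nil_FG unfolding w_def by (rule Bij_into)
    have hw: "h [] = w" using agree by (simp add: F_def w_def)
    have pw: "?p w = ?q w"
      using AutT_inv_left[OF g Nil_FG] AutT_inv_left[OF h Nil_FG] hw by (simp add: w_def)
    have pwl: "?p (mult_red w [l]) = ?q (mult_red w [l])" if l: "l \<in> Lts d" for l
    proof -
      have wl: "mult_red w [l] \<in> FG d" using wf single_FG[OF l] by (rule mult_red_closed)
      have bb: "bij_betw g (FG d) (FG d)" using AutT_Bij[OF g] by (simp add: Bij_def)
      then obtain u where u: "u \<in> FG d" "g u = mult_red w [l]"
        using wl by (metis bij_betw_iff_bijections)
      have "tree_adj d w (mult_red w [l])" using l by (cases l) (auto simp: tree_adj_def Lts_def)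
      then have "tree_adj d [] u" using AutT_adj[OF g Nil_FG u(1)] u(2) by (simp add: w_def)
      then obtain j b where jb: "j < d" "u = [(j, b)]" by (auto simp: tree_adj_def)
      then have "u \<in> F" by (auto simp: F_def Lts_def)
      then have "h u = mult_red w [l]" using agree u(2) by simp
      then show ?thesis
        using AutT_inv_left[OF g u(1)] AutT_inv_left[OF h u(1)] u(2) by simp
    qed
    have "?p = ?q"
    proof (rule determ[OF AutT_inv_closed[OF g] AutT_inv_closed[OF h] _ _ wf pw pwl])
      show "\<And>x v i. x \<in> FG d \<Longrightarrow> v \<in> FG d \<Longrightarrow> i < d \<Longrightarrow>
         expsum i (?p (mult_red x v)) = expsum i (?p v) + expsum i (?p x) - expsum i (?p [])"
        using inv_const_incr[OF gS] by blast
      show "\<And>x v i. x \<in> FG d \<Longrightarrow> v \<in> FG d \<Longrightarrow> i < d \<Longrightarrow>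
         expsum i (?q (mult_red x v)) = expsum i (?q v) + expsum i (?q x) - expsum i (?q [])"
        using inv_const_incr[OF hS] by blast
    qed
    then show "h = g"
      using group.inv_inv[OF group_AutT g] group.inv_inv[OF group_AutT h] by metis
  qed
  then show "\<exists>F. finite F \<and> F \<subseteq> FG d \<and> (\<forall>h\<in>?S. (\<forall>x\<in>F. h x = g x) \<longrightarrow> h = g)"
    using finF subF by blast
qed

end
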